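(* Let $n \geq 2$, $Q \geq 1$, $0<\mu_0 \leq (4\pi)^{-n}$ and $0<c_4<1$. Then the set \[ \bigcup_{\substack{4\mu_0 Q \leq q \leq 4Q \\ q \equiv 0 \ (\mathrm{mod}\ 4)}} \ \bigcup_{\substack{2 \leq a_2,\ldots,a_n \leq 2q \\ a_j \equiv 0\ (\mathrm{mod}\ 2)}} \Big\{ y' = (y_2,\ldots,y_n) \in [0,2\pi]^{n-1} : \Big| y_j - \frac{2\pi a_j}{q} \Big| < \frac{\pi c_4}{(\mu_0 Q)\, Q^{1/(n-1)}},\ j=2,\ldots,n \Big\} \] (the unions over integers $q$ and integer tuples $(a_2,\dots,a_n)$) has Lebesgue measure at least $c_4^{\,n-1} 3^{-(n-1)} 2^{-n}$. *)

theory Defs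
  imports "HOL-Analysis.Analysis"
begin

end

theory Submission
  imports Defs
begin


definition cub :: "real^'m \<Rightarrow> real \<Rightarrow> (real^'m) set" where
  "cub c R = {y. \<forall>j. \<bar>y$j - c$j\<bar> < R}"

lemma cub_box: "cub c R = box (c - (\<chi> j. R)) (c + (\<chi> j. R))"
  unfolding cub_def by (auto simp: mem_box_cart abs_less_iff algebra_simps)

lemma cub_sets[measurable]: "cub c R \<in> sets lebesgue"
  unfolding cub_box by simp

lemma measure_cub: assumes "R \<ge> 0" shows "measure lebesgue (cub (c::real^'m) R) = (2*R) ^ CARD('m)"
proof -
  let ?l = "c - (\<chi> j. R)" and ?u = "c + (\<chi> j. R)"
  have b: "\<And>b. b \<in> Basis \<Longrightarrow> (?u - ?l) \<bullet> b = 2*R"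
    by (auto simp: Basis_vec_def inner_axis)
  have "measure lebesgue (cub c R) = measure lborel (box ?l ?u)"
    unfolding cub_box by (rule measure_completion) simp
  also have "\<dots> = (\<Prod>b\<in>Basis. (?u - ?l) \<bullet> b)"
  proof -
    have "\<forall>b\<in>Basis. ?l \<bullet> b \<le> ?u \<bullet> b"
      using b assms by (metis diff_ge_0_iff_ge inner_diff_left mult_nonneg_nonneg zero_le_numeral)
    then show ?thesis by (simp only: measure_lborel_box_eq if_P)
  qed
  also have "\<dots> = (\<Prod>b\<in>(Basis::(real^'m) set). 2*R)"
    by (rule prod.cong[OF refl]) (rule b)
  also have "\<dots> = (2*R) ^ CARD('m)" by simp
  finally show ?thesis .
qed




lemma cub_inter_sub:
 assumes "w \<in> cub ci Ri" "w \<in> cub c0 R0" "Ri \<le> R0"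
  shows "cub ci Ri \<subseteq> cub c0 (3 * R0)"
proof
  fix y assume y: "y \<in> cub ci Ri"
  show "y \<in> cub c0 (3 * R0)"
    unfolding cub_def mem_Collect_eq
  proof (intro allI)
    fix j
    have "\<bar>y$j - ci$j\<bar> < Ri" "\<bar>w$j - ci$j\<bar> < Ri" "\<bar>w$j - c0$j\<bar> < R0"
      using y assms by (auto simp: cub_def)
    then show "\<bar>y$j - c0$j\<bar> < 3 * R0" using assms by linarith
  qed
qed

lemma vitali_cub:
  fixes c :: "'i \<Rightarrow> real^'m" and R :: "'i \<Rightarrow> real"
  assumes "finite I" "\<forall>i\<in>I. R i > 0"
  shows "\<exists>J\<subseteq>I. pairwise (\<lambda>i j. disjnt (cub (c i) (R i)) (cub (c j) (R j))) J \<and>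
           (\<Union>i\<in>I. cub (c i) (R i)) \<subseteq> (\<Union>j\<in>J. cub (c j) (3 * R j))"
  using assms
proof (induction "card I" arbitrary: I rule: less_induct)
  case less
  show ?case
  proof (cases "I = {}")
    case True then show ?thesis by auto
  next
    case False
    have "Max (R ` I) \<in> R ` I" using Max_in[of "R ` I"] False less.prems by auto
    then obtain i0 where i0: "i0 \<in> I" "R i0 = Max (R ` I)" by (metis imageE)
    have Rle: "R i \<le> R i0" if "i \<in> I" for i
      using i0 that less.prems by simp
    define I' where "I' = {i\<in>I. disjnt (cub (c i) (R i)) (cub (c i0) (R i0))}"
    have c0: "c i0 \<in> cub (c i0) (R i0)" using i0 less.prems by (auto simp: cub_def)
    have "i0 \<notin> I'" using c0 by (auto simp: I'_def disjnt_def)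
    moreover have "I' \<subseteq> I" by (auto simp: I'_def)
    ultimately have "I' \<subset> I" using i0(1) by blast
    then have "card I' < card I" using less.prems by (simp add: psubset_card_mono)
    then obtain J' where J': "J' \<subseteq> I'" "pairwise (\<lambda>i j. disjnt (cub (c i) (R i)) (cub (c j) (R j))) J'"
           "(\<Union>i\<in>I'. cub (c i) (R i)) \<subseteq> (\<Union>j\<in>J'. cub (c j) (3 * R j))"
      using less.hyps[of I'] less.prems \<open>I' \<subset> I\<close> by (meson finite_subset psubset_imp_subset subset_iff)
    show ?thesis
    proof (intro exI conjI)
      show "insert i0 J' \<subseteq> I" using J'(1) i0 by (auto simp: I'_def)
      show "pairwise (\<lambda>i j. disjnt (cub (c i) (R i)) (cub (c j) (R j))) (insert i0 J')"
        using J'(1,2) by (auto simp: pairwise_insert I'_def disjnt_sym)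
      show "(\<Union>i\<in>I. cub (c i) (R i)) \<subseteq> (\<Union>j\<in>insert i0 J'. cub (c j) (3 * R j))"
      proof (rule UN_least)
        fix i assume i: "i \<in> I"
        show "cub (c i) (R i) \<subseteq> (\<Union>j\<in>insert i0 J'. cub (c j) (3 * R j))"
        proof (cases "i \<in> I'")
          case True then show ?thesis using J'(3) by blast
        next
          case False
          then obtain w where "w \<in> cub (c i) (R i)" "w \<in> cub (c i0) (R i0)"
            using i by (auto simp: I'_def disjnt_def)
          then have "cub (c i) (R i) \<subseteq> cub (c i0) (3 * R i0)"
            using Rle[OF i] by (intro cub_inter_sub) auto
          then show ?thesis by blast
        qed
      qed
    qed
  qed
qed




lemma dirichlet_aux:
  fixes z :: "real^'m" and K N :: nat
  assumes K: "K \<ge> 1" and KN: "K ^ CARD('m) \<le> N"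
  shows "\<exists>p::nat. 1 \<le> p \<and> p \<le> N \<and> (\<exists>b::'m \<Rightarrow> int. \<forall>j. \<bar>real p * z$j - b j\<bar> < 1 / real K)"
proof -
  define f where "f p = (\<lambda>j. nat \<lfloor>real K * frac (real p * z$j)\<rfloor>)" for p :: nat
  have fr: "f p j < K" for p j
  proof -
    have "real K * frac (real p * z$j) < real K * 1"
      using K frac_lt_1 by (intro mult_strict_left_mono) auto
    then have "\<lfloor>real K * frac (real p * z$j)\<rfloor> < int K"
      by (simp add: floor_less_iff)
    then show ?thesis unfolding f_def using K by (simp add: nat_less_iff)
  qed
  have sub: "f ` {0..N} \<subseteq> PiE UNIV (\<lambda>_. {..<K})"
    using fr by (auto simp: PiE_def Pi_def)
  have "card (f ` {0..N}) \<le> card (PiE (UNIV::'m set) (\<lambda>_. {..<K}))"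
    by (rule card_mono[OF _ sub]) (simp add: finite_PiE)
  also have "\<dots> = K ^ CARD('m)" by (simp add: card_PiE)
  finally have "card (f ` {0..N}) < card {0..N}" using KN by simp
  then have "\<not> inj_on f {0..N}" using card_image by fastforce
  then obtain p1 p2 where pp: "p1 \<in> {0..N}" "p2 \<in> {0..N}" "p1 \<noteq> p2" "f p1 = f p2"
    unfolding inj_on_def by blast
  have main: "\<exists>p::nat. 1 \<le> p \<and> p \<le> N \<and> (\<exists>b::'m \<Rightarrow> int. \<forall>j. \<bar>real p * z$j - b j\<bar> < 1 / real K)"
    if "p1 < p2" "p1 \<le> N" "p2 \<le> N" "f p1 = f p2" for p1 p2 :: nat
  proof (intro exI conjI)
    show "1 \<le> p2 - p1" "p2 - p1 \<le> N" using that by auto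
    show "\<forall>j. \<bar>real (p2 - p1) * z$j - real_of_int (\<lfloor>real p2 * z$j\<rfloor> - \<lfloor>real p1 * z$j\<rfloor>)\<bar> < 1 / real K"
    proof
      fix j
      let ?u = "frac (real p1 * z$j)" and ?v = "frac (real p2 * z$j)"
      have "f p1 j = f p2 j" using that by simp
      moreover have "0 \<le> \<lfloor>real K * ?u\<rfloor>" "0 \<le> \<lfloor>real K * ?v\<rfloor>"
        by (simp_all add: frac_ge_0)
      ultimately have eq: "\<lfloor>real K * ?u\<rfloor> = \<lfloor>real K * ?v\<rfloor>"
        unfolding f_def by (simp add: eq_nat_nat_iff)
      have "\<bar>real K * ?v - real K * ?u\<bar> < 1"
        using eq by linarith
      then have "real K * \<bar>?v - ?u\<bar> < 1"
        by (simp add: abs_mult right_diff_distrib[symmetric])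
      then have lt: "\<bar>?v - ?u\<bar> < 1 / real K" using K
        by (simp add: field_simps)
      have "real (p2 - p1) * z$j - real_of_int (\<lfloor>real p2 * z$j\<rfloor> - \<lfloor>real p1 * z$j\<rfloor>) = ?v - ?u"
        using that by (simp add: frac_def of_nat_diff algebra_simps)
      then show "\<bar>real (p2 - p1) * z$j - real_of_int (\<lfloor>real p2 * z$j\<rfloor> - \<lfloor>real p1 * z$j\<rfloor>)\<bar> < 1 / real K"
        using lt by simp
    qed
  qed
  show ?thesis
  proof (cases "p1 < p2")
    case True then show ?thesis using main pp by auto
  next
    case False then show ?thesis using main[of p2 p1] pp by auto
  qed
qed




lemma measure_box_const:
  fixes a b :: "real^'m"
  assumes "\<And>j. b$j - a$j = L" "L \<ge> 0"
  shows "measure lebesgue (box a b) = L ^ CARD('m)"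
proof -
  have bb: "\<And>x. x \<in> Basis \<Longrightarrow> (b - a) \<bullet> x = L"
    using assms by (auto simp: Basis_vec_def inner_axis)
  have "measure lebesgue (box a b) = measure lborel (box a b)"
    by (rule measure_completion) simp
  also have "\<dots> = (\<Prod>x\<in>Basis. (b - a) \<bullet> x)"
  proof -
    have "\<forall>x\<in>Basis. a \<bullet> x \<le> b \<bullet> x"
      using bb assms by (metis diff_ge_0_iff_ge inner_diff_left)
    then show ?thesis by (simp only: measure_lborel_box_eq if_P)
  qed
  also have "\<dots> = (\<Prod>x\<in>(Basis::(real^'m) set). L)"
    by (rule prod.cong[OF refl]) (rule bb)
  also have "\<dots> = L ^ CARD('m)" by simp
  finally show ?thesis .
qed

lemma measure_cbox_const:
  fixes a b :: "real^'m"
  assumes "\<And>j. b$j - a$j = L" "L \<ge> 0"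
  shows "measure lebesgue (cbox a b) = L ^ CARD('m)"
proof -
  have bb: "\<And>x. x \<in> Basis \<Longrightarrow> (b - a) \<bullet> x = L"
    using assms by (auto simp: Basis_vec_def inner_axis)
  have "measure lebesgue (cbox a b) = measure lborel (cbox a b)"
    by (rule measure_completion) simp
  also have "\<dots> = (\<Prod>x\<in>Basis. (b - a) \<bullet> x)"
  proof -
    have "\<forall>x\<in>Basis. a \<bullet> x \<le> b \<bullet> x"
      using bb assms by (metis diff_ge_0_iff_ge inner_diff_left)
    then show ?thesis by (simp only: measure_lborel_cbox_eq if_P)
  qed
  also have "\<dots> = (\<Prod>x\<in>(Basis::(real^'m) set). L)"
    by (rule prod.cong[OF refl]) (rule bb)
  also have "\<dots> = L ^ CARD('m)" by simp
  finally show ?thesis .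
qed

lemma box_lmeas: "box (a::real^'m) b \<in> lmeasurable"
  by (rule bounded_set_imp_lmeasurable) auto

lemma cub_lmeas: "cub c R \<in> lmeasurable"
  unfolding cub_box by (rule box_lmeas)




lemma memS:
  fixes y :: "real^'m" and b :: "'m \<Rightarrow> int" and p :: nat
  assumes p: "1 \<le> p" "real p \<le> Q" "\<mu>0 * Q \<le> real p"
    and b: "\<forall>i. int p \<le> b i \<and> b i \<le> 2 * int p"
    and y: "\<forall>i. pi * real_of_int (b i) / real p - s < y$i \<and> y$i < pi * real_of_int (b i) / real p"
    and s: "0 \<le> s" "s < pi" "s \<le> r"
  shows "y \<in> (\<Union>q\<in>{q::int. 4 * \<mu>0 * Q \<le> real_of_int q \<and> real_of_int q \<le> 4 * Q \<and> 4 dvd q}.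
        \<Union>a\<in>{a :: 'm \<Rightarrow> int. \<forall>j. 2 \<le> a j \<and> a j \<le> 2 * q \<and> 2 dvd a j}.
          {y :: real ^ 'm. (\<forall>j. 0 \<le> y $ j \<and> y $ j \<le> 2 * pi) \<and>
             (\<forall>j. \<bar>y $ j - 2 * pi * real_of_int (a j) / real_of_int q\<bar> < r)})"
proof (rule UN_I[of "4 * int p"])
  show "4 * int p \<in> {q::int. 4 * \<mu>0 * Q \<le> real_of_int q \<and> real_of_int q \<le> 4 * Q \<and> 4 dvd q}"
    using p by auto
  show "y \<in> (\<Union>a\<in>{a :: 'm \<Rightarrow> int. \<forall>j. 2 \<le> a j \<and> a j \<le> 2 * (4 * int p) \<and> 2 dvd a j}.
          {y :: real ^ 'm. (\<forall>j. 0 \<le> y $ j \<and> y $ j \<le> 2 * pi) \<and>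
             (\<forall>j. \<bar>y $ j - 2 * pi * real_of_int (a j) / real_of_int (4 * int p)\<bar> < r)})"
  proof (rule UN_I[of "\<lambda>i. 2 * b i"])
    show "(\<lambda>i. 2 * b i) \<in> {a :: 'm \<Rightarrow> int. \<forall>j. 2 \<le> a j \<and> a j \<le> 2 * (4 * int p) \<and> 2 dvd a j}"
    proof (simp only: mem_Collect_eq, intro allI conjI)
      fix j
      have "int p \<ge> 1" using p by simp
      then show "2 \<le> 2 * b j" "2 * b j \<le> 2 * (4 * int p)" using b[rule_format, of j] by linarith+
      show "2 dvd 2 * b j" by simp
    qed
    have pp: "real p > 0" using p by simp
    have c: "2 * pi * real_of_int (2 * b i) / real_of_int (4 * int p) = pi * real_of_int (b i) / real p" for i
      using pp by (simp add: field_simps)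
    have cb: "pi \<le> pi * real_of_int (b i) / real p \<and> pi * real_of_int (b i) / real p \<le> 2 * pi" for i
    proof -
      have "real p \<le> real_of_int (b i)" "real_of_int (b i) \<le> 2 * real p" using b[rule_format, of i] by linarith+
      then show ?thesis using pp by (simp add: field_simps)
    qed
    show "y \<in> {y :: real ^ 'm. (\<forall>j. 0 \<le> y $ j \<and> y $ j \<le> 2 * pi) \<and>
             (\<forall>j. \<bar>y $ j - 2 * pi * real_of_int (2 * b j) / real_of_int (4 * int p)\<bar> < r)}"
      unfolding mem_Collect_eq c
    proof (intro conjI allI)
      fix j
      show "0 \<le> y $ j" "y $ j \<le> 2 * pi" using y[rule_format, of j] cb[of j] s by linarith+
      show "\<bar>y $ j - pi * real_of_int (b j) / real p\<bar> < r" using y[rule_format, of j] s by linarith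
    qed
  qed
qed

lemma Smeas:
  "(\<Union>q\<in>{q::int. 4 * \<mu>0 * Q \<le> real_of_int q \<and> real_of_int q \<le> 4 * Q \<and> 4 dvd q}.
        \<Union>a\<in>{a :: 'm::finite \<Rightarrow> int. \<forall>j. 2 \<le> a j \<and> a j \<le> 2 * q \<and> 2 dvd a j}.
          {y :: real ^ 'm. (\<forall>j. 0 \<le> y $ j \<and> y $ j \<le> 2 * pi) \<and>
             (\<forall>j. \<bar>y $ j - 2 * pi * real_of_int (a j) / real_of_int q\<bar> < r)}) \<in> sets lebesgue"
proof -
  have piece: "{y :: real ^ 'm. (\<forall>j. 0 \<le> y $ j \<and> y $ j \<le> 2 * pi) \<and>
             (\<forall>j. \<bar>y $ j - 2 * pi * real_of_int (a j) / real_of_int q\<bar> < r)} \<in> sets lebesgue"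
    for q :: int and a :: "'m \<Rightarrow> int"
  proof -
    have eq: "{y :: real ^ 'm. (\<forall>j. 0 \<le> y $ j \<and> y $ j \<le> 2 * pi) \<and>
             (\<forall>j. \<bar>y $ j - 2 * pi * real_of_int (a j) / real_of_int q\<bar> < r)}
      = cbox 0 (\<chi> j. 2 * pi) \<inter> cub (\<chi> j. 2 * pi * real_of_int (a j) / real_of_int q) r"
      by (auto simp: cub_def mem_box_cart)
    show ?thesis
      unfolding eq by (intro sets.Int fmeasurableD[OF lmeasurable_cbox] cub_sets)
  qed
  show ?thesis by (intro sets.countable_UN' countableI_type image_subsetI piece)
qed




lemma rhs_lemma:
  fixes \<mu>0 c4 :: real and d n :: nat
  assumes nd: "n - 1 = d" "n = d + 1" and mu0: "0 < \<mu>0" and mu1: "\<mu>0 \<le> (4 * pi) powi (- int n)"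
    and c40: "0 < c4"
  shows "c4 ^ (n - 1) * 3 powi (- int (n - 1)) * 2 powi (- int n) \<le> (c4 / 12) ^ d * (pi ^ d - \<mu>0 * (8 * pi) ^ d)"
proof -
  have mu': "\<mu>0 \<le> inverse ((4 * pi) ^ (d + 1))"
  proof -
    have "(4 * pi) powi (- int n) = inverse ((4 * pi) ^ n)"
      by (simp only: power_int_minus power_int_of_nat)
    then show ?thesis using mu1 nd(2) by simp
  qed
  have "\<mu>0 * (8 * pi) ^ d \<le> inverse ((4 * pi) ^ (d + 1)) * (8 * pi) ^ d"
    using mult_right_mono[OF mu', of "(8 * pi) ^ d"] by simp
  also have "\<dots> = 2 ^ d / (4 * pi)"
  proof -
    have "(8 * pi) ^ d = (2 * (4 * pi)) ^ d" by simp
    also have "\<dots> = 2 ^ d * (4 * pi) ^ d" by (rule power_mult_distrib)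
    finally have e: "(8 * pi) ^ d = 2 ^ d * (4 * pi) ^ d" .
    have g: "inverse (X * a) * (c * X) = c / a" if "X \<noteq> 0" "a \<noteq> 0" for X a c :: real
      using that by (simp add: field_simps)
    have "(4 * pi) ^ (d + 1) = (4 * pi) ^ d * (4 * pi)" by (rule power_Suc2[of _ d, unfolded Suc_eq_plus1])
    note h = this
    show ?thesis unfolding e h by (rule g) (use pi_gt_zero in auto)
  qed
  also have "\<dots> \<le> 2 ^ d / 2" using pi_ge_two by (intro divide_left_mono) auto
  finally have A: "\<mu>0 * (8 * pi) ^ d \<le> 2 ^ d / 2" .
  have B: "(2::real) ^ d \<le> pi ^ d" using pi_ge_two by (intro power_mono) auto
  have C: "(2::real) ^ d / 2 \<le> pi ^ d - \<mu>0 * (8 * pi) ^ d" using A B by linarith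
  have e1: "c4 ^ (n - 1) * 3 powi (- int (n - 1)) * 2 powi (- int n) = c4 ^ d / (3 ^ d * (2 ^ d * 2))"
  proof -
    have f1: "(3::real) powi (- int d) = inverse (3 ^ d)" "(2::real) powi (- int (d + 1)) = inverse (2 ^ (d+1))"
      by (simp_all only: power_int_minus power_int_of_nat)
    have f2: "(2::real) ^ (d + 1) = 2 ^ d * 2" by (rule power_Suc2[of _ d, unfolded Suc_eq_plus1])
    have g: "c * inverse A * inverse (B * 2) = c / (A * (B * 2))" for c A B :: real
      by (simp only: divide_inverse inverse_mult_distrib mult.assoc)
    show ?thesis unfolding nd(1) unfolding nd(2) f1 f2 by (rule g)
  qed
  have e12: "(12::real) ^ d = 3 ^ d * 2 ^ d * 2 ^ d"
  proof -
    have "(12::real) ^ d = (3 * 2 * 2) ^ d" by simp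
    then show ?thesis by (simp only: power_mult_distrib)
  qed
  have e2: "(c4 / 12) ^ d * (2 ^ d / 2) = c4 ^ d / (3 ^ d * (2 ^ d * 2))"
  proof -
    have g: "c / (A * B * B) * (B / 2) = c / (A * (B * 2))" if "B \<noteq> 0" for c A B :: real
      using that by (simp add: field_simps)
    show ?thesis unfolding power_divide e12 by (rule g) simp
  qed
  have "c4 ^ (n - 1) * 3 powi (- int (n - 1)) * 2 powi (- int n) = (c4 / 12) ^ d * (2 ^ d / 2)"
    using e1 e2 by (rule trans[OF _ sym])
  also have "\<dots> \<le> (c4 / 12) ^ d * (pi ^ d - \<mu>0 * (8 * pi) ^ d)"
    using C c40 by (intro mult_left_mono) auto
  finally show ?thesis .
qed




lemma mainlemma:
  fixes n :: nat and Q \<mu>0 c4 :: real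
  assumes hn: "n = CARD('m::finite) + 1"
    and "n \<ge> 2" and Q1: "Q \<ge> 1"
    and mu0: "0 < \<mu>0" and mu1: "\<mu>0 \<le> (4 * pi) powi (- int n)"
    and c40: "0 < c4" and c41: "c4 < 1"
  shows "emeasure lebesgue
     (\<Union>q\<in>{q::int. 4 * \<mu>0 * Q \<le> real_of_int q \<and> real_of_int q \<le> 4 * Q \<and> 4 dvd q}.
        \<Union>a\<in>{a :: 'm \<Rightarrow> int. \<forall>j. 2 \<le> a j \<and> a j \<le> 2 * q \<and> 2 dvd a j}.
          {y :: real ^ 'm. (\<forall>j. 0 \<le> y $ j \<and> y $ j \<le> 2 * pi) \<and>
             (\<forall>j. \<bar>y $ j - 2 * pi * real_of_int (a j) / real_of_int q\<bar>
                  < pi * c4 / ((\<mu>0 * Q) * Q powr (1 / real (n - 1))))})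
   \<ge> ennreal (c4 ^ (n - 1) * 3 powi (- int (n - 1)) * 2 powi (- int n))"
   (is "emeasure lebesgue ?S \<ge> ennreal ?rhs")
proof -
  define d where "d = CARD('m)"
  have d1: "d \<ge> 1" by (simp add: d_def)
  have nd: "n - 1 = d" "n = d + 1" using hn by (auto simp: d_def)
  define QQ where "QQ = Q powr (1 / real d)"
  define K where "K = nat \<lfloor>QQ\<rfloor>"
  define N where "N = nat \<lfloor>Q\<rfloor>"
  have QQ1: "QQ \<ge> 1" unfolding QQ_def using Q1 d1 by (simp add: ge_one_powr_ge_zero)
  have QQd: "QQ ^ d = Q" unfolding QQ_def using Q1 d1
    by (simp add: powr_realpow[symmetric] powr_powr)
  have Kf: "real K = real_of_int \<lfloor>QQ\<rfloor>" unfolding K_def using QQ1 by simp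
  have fl: "real_of_int \<lfloor>QQ\<rfloor> \<le> QQ" "QQ < real_of_int \<lfloor>QQ\<rfloor> + 1" by linarith+
  have "\<lfloor>QQ\<rfloor> \<ge> 1" using QQ1 by (simp add: one_le_floor)
  then have K1r: "real K \<ge> 1" using Kf by simp
  then have K1: "K \<ge> 1" by simp
  have KQQ: "real K \<le> QQ" using Kf fl by linarith
  have QQK: "QQ \<le> 2 * real K" using Kf fl K1r by linarith
  have "real K ^ d \<le> QQ ^ d" by (rule power_mono[OF KQQ]) simp
  then have KdQ: "real K ^ d \<le> Q" using QQd by simp
  have "int (K ^ d) \<le> \<lfloor>Q\<rfloor>" using KdQ by (simp add: le_floor_iff)
  then have KdN: "K ^ d \<le> N" unfolding N_def by (metis nat_int nat_mono of_nat_power)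
  have "QQ ^ d \<le> (2 * real K) ^ d" by (rule power_mono[OF QQK]) (use QQ1 in simp)
  then have QKd: "Q \<le> 2 ^ d * real K ^ d" using QQd by (simp add: power_mult_distrib)
  have NQ: "real N \<le> Q" unfolding N_def using Q1 by linarith
  define cen where "cen p b = (\<chi> j. pi * real_of_int (b j) / real p)" for p :: nat and b :: "'m \<Rightarrow> int"
  define Rd where "Rd p = pi / (real p * real K)" for p :: nat
  define BB where "BB p = PiE (UNIV::'m set) (\<lambda>_. {int p..2 * int p})" for p :: nat
  define G where "G = Sigma {p\<in>{1..N}. \<mu>0 * Q \<le> real p} BB"
  define Bd where "Bd = Sigma {p\<in>{1..N}. real p < \<mu>0 * Q} BB"
  define Reg where "Reg = cbox ((\<chi> j. pi)::real^'m) (\<chi> j. 2 * pi)"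
  have finBB: "finite (BB p)" for p unfolding BB_def by (simp add: finite_PiE)
  have finG: "finite G" "finite Bd" unfolding G_def Bd_def using finBB by auto
  have cover: "Reg \<subseteq> (\<Union>(p,b)\<in>G. cub (cen p b) (Rd p)) \<union> (\<Union>(p,b)\<in>Bd. cub (cen p b) (Rd p))"
  proof
    fix y assume yR: "y \<in> Reg"
    then have yb: "\<And>j. pi \<le> y$j \<and> y$j \<le> 2*pi" by (simp add: Reg_def mem_box_cart)
    define z :: "real^'m" where "z = (\<chi> j. y$j / pi)"
    have zb: "1 \<le> z$j \<and> z$j \<le> 2" for j using yb[of j] by (simp add: z_def field_simps)
    obtain p b where p: "1 \<le> p" "p \<le> N" and b: "\<And>j. \<bar>real p * z$j - real_of_int (b j)\<bar> < 1 / real K"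
      using dirichlet_aux[OF K1, of N z] KdN d_def by blast
    have iK: "1 / real K \<le> 1" using K1r by simp
    have bB: "b \<in> BB p"
    proof -
      have "int p \<le> b j \<and> b j \<le> 2 * int p" for j
      proof -
        have "real p * 1 \<le> real p * z$j" "real p * z$j \<le> real p * 2"
          using zb[of j] by (intro mult_left_mono; simp)+
        then have "real_of_int (int p - 1) < real_of_int (b j)" "real_of_int (b j) < real_of_int (2 * int p + 1)"
          using b[of j] iK by (auto simp: abs_less_iff)
        then have "int p - 1 < b j" "b j < 2 * int p + 1" by (simp_all only: of_int_less_iff)
        then show ?thesis by linarith
      qed
      then show ?thesis by (simp add: BB_def PiE_UNIV_domain)
    qed
    have yc: "y \<in> cub (cen p b) (Rd p)"
      unfolding cub_def mem_Collect_eq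
    proof (intro allI)
      fix j
      have pp: "real p > 0" using p by simp
      have "y$j - cen p b $ j = (pi / real p) * (real p * z$j - real_of_int (b j))"
        using pp by (simp add: cen_def z_def field_simps)
      then have "\<bar>y$j - cen p b $ j\<bar> = (pi / real p) * \<bar>real p * z$j - real_of_int (b j)\<bar>"
        using pp by (simp add: abs_mult)
      also have "\<dots> < (pi / real p) * (1 / real K)"
        using pp b[of j] by (intro mult_strict_left_mono) auto
      also have "\<dots> = Rd p" by (simp add: Rd_def)
      finally show "\<bar>y$j - cen p b $ j\<bar> < Rd p" .
    qed
    show "y \<in> (\<Union>(p,b)\<in>G. cub (cen p b) (Rd p)) \<union> (\<Union>(p,b)\<in>Bd. cub (cen p b) (Rd p))"
    proof (cases "\<mu>0 * Q \<le> real p")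
      case True
      then have "(p, b) \<in> G" using p bB by (simp add: G_def)
      then show ?thesis using yc by blast
    next
      case False
      then have "(p, b) \<in> Bd" using p bB by (simp add: Bd_def)
      then show ?thesis using yc by blast
    qed
  qed
  have Rd0: "Rd p \<ge> 0" for p by (simp add: Rd_def)
  have cardBB: "card (BB p) = (p + 1) ^ d" for p
  proof -
    have "nat (int p + 1) = p + 1" by simp
    then show ?thesis by (simp add: BB_def card_PiE d_def)
  qed
  have bad: "measure lebesgue (\<Union>(p,b)\<in>Bd. cub (cen p b) (Rd p)) \<le> \<mu>0 * (8 * pi) ^ d"
  proof -
    let ?P = "{p\<in>{1..N}. real p < \<mu>0 * Q}"
    have finP: "finite ?P" by simp
    have "(\<Union>(p,b)\<in>Bd. cub (cen p b) (Rd p)) = (\<Union>i\<in>Bd. cub (cen (fst i) (snd i)) (Rd (fst i)))"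
      by (simp add: split_def)
    also have "measure lebesgue \<dots> \<le> (\<Sum>i\<in>Bd. measure lebesgue (cub (cen (fst i) (snd i)) (Rd (fst i))))"
      by (rule measure_UNION_le[OF finG(2)]) simp
    also have "\<dots> = (\<Sum>i\<in>Bd. (2 * Rd (fst i)) ^ d)"
      by (simp add: measure_cub Rd0 d_def)
    also have "\<dots> = (\<Sum>p\<in>?P. \<Sum>b\<in>BB p. (2 * Rd p) ^ d)"
      unfolding Bd_def by (subst sum.Sigma[OF finP]) (auto simp: finBB split_def)
    also have "\<dots> = (\<Sum>p\<in>?P. real ((p + 1) ^ d) * (2 * Rd p) ^ d)"
      by (simp add: cardBB)
    also have "\<dots> \<le> (\<Sum>p\<in>?P. (4 * pi / real K) ^ d)"
    proof (rule sum_mono)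
      fix p assume "p \<in> ?P"
      then have p1: "real p \<ge> 1" by simp
      have "real (p + 1) * (2 * Rd p) = 2 * pi / real K * ((real p + 1) / real p)"
        using p1 K1r by (simp add: Rd_def field_simps)
      also have "\<dots> \<le> 2 * pi / real K * 2"
        using p1 K1r by (intro mult_left_mono) (auto simp: field_simps)
      finally have "real (p + 1) * (2 * Rd p) \<le> 4 * pi / real K" by simp
      then have "(real (p + 1) * (2 * Rd p)) ^ d \<le> (4 * pi / real K) ^ d"
        by (intro power_mono) (auto simp: Rd0)
      then show "real ((p + 1) ^ d) * (2 * Rd p) ^ d \<le> (4 * pi / real K) ^ d"
        by (simp add: power_mult_distrib)
    qed
    also have "\<dots> = real (card ?P) * (4 * pi / real K) ^ d" by simp
    also have "\<dots> \<le> (\<mu>0 * Q) * (4 * pi / real K) ^ d"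
    proof (rule mult_right_mono)
      have "?P \<subseteq> {1..nat \<lfloor>\<mu>0 * Q\<rfloor>}"
      proof
        fix p assume "p \<in> ?P"
        then have "real p < \<mu>0 * Q" "1 \<le> p" by auto
        then have "int p \<le> \<lfloor>\<mu>0 * Q\<rfloor>" by (simp add: le_floor_iff)
        then show "p \<in> {1..nat \<lfloor>\<mu>0 * Q\<rfloor>}" using \<open>1 \<le> p\<close> by auto
      qed
      then have "card ?P \<le> card {1..nat \<lfloor>\<mu>0 * Q\<rfloor>}" by (intro card_mono) auto
      then have "card ?P \<le> nat \<lfloor>\<mu>0 * Q\<rfloor>" by simp
      moreover have "real (nat \<lfloor>\<mu>0 * Q\<rfloor>) \<le> \<mu>0 * Q" using mu0 Q1 by simp
      ultimately show "real (card ?P) \<le> \<mu>0 * Q"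
        by (meson of_nat_le_iff order_trans)
    qed simp
    also have "\<dots> = \<mu>0 * (Q * (4 * pi) ^ d / real K ^ d)"
      by (simp add: power_divide)
    also have "\<dots> \<le> \<mu>0 * (2 ^ d * real K ^ d * (4 * pi) ^ d / real K ^ d)"
    proof -
      have "Q * (4 * pi) ^ d / real K ^ d \<le> 2 ^ d * real K ^ d * (4 * pi) ^ d / real K ^ d"
        by (rule divide_right_mono[OF mult_right_mono[OF QKd]]) auto
      then show ?thesis using mu0 by (intro mult_left_mono) auto
    qed
    also have "2 ^ d * real K ^ d * (4 * pi) ^ d / real K ^ d = (2::real) ^ d * (4 * pi) ^ d"
      using K1r by simp
    also have "(2::real) ^ d * (4 * pi) ^ d = (2 * (4 * pi)) ^ d"
      by (rule power_mult_distrib[symmetric])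
    also have "(2 * (4 * pi)) ^ d = (8 * pi) ^ d" by simp
    finally show ?thesis .
  qed
  define cc where "cc i = cen (fst i) (snd i)" for i :: "nat \<times> ('m \<Rightarrow> int)"
  define RR where "RR i = Rd (fst i)" for i :: "nat \<times> ('m \<Rightarrow> int)"
  have RRpos: "RR i > 0" if "i \<in> G" for i
    using that K1r by (auto simp: RR_def Rd_def G_def)
  obtain J where J: "J \<subseteq> G" "pairwise (\<lambda>i j. disjnt (cub (cc i) (RR i)) (cub (cc j) (RR j))) J"
      "(\<Union>i\<in>G. cub (cc i) (RR i)) \<subseteq> (\<Union>j\<in>J. cub (cc j) (3 * RR j))"
    using vitali_cub[OF finG(1), of RR cc] RRpos by blast
  have finJ: "finite J" using J(1) finG(1) finite_subset by blast
  define U1 where "U1 = (\<Union>(p,b)\<in>G. cub (cen p b) (Rd p))"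
  define U2 where "U2 = (\<Union>(p,b)\<in>Bd. cub (cen p b) (Rd p))"
  have U1eq: "U1 = (\<Union>i\<in>G. cub (cc i) (RR i))"
    by (simp add: U1_def cc_def RR_def split_def)
  have U1m: "U1 \<in> lmeasurable" unfolding U1eq
    using finG(1) by (intro fmeasurable.finite_UN) (auto simp: cub_lmeas)
  have U2m: "U2 \<in> lmeasurable" unfolding U2_def
    using finG(2) by (intro fmeasurable.finite_UN) (auto simp: cub_lmeas)
  have m3: "(\<Union>j\<in>J. cub (cc j) (3 * RR j)) \<in> lmeasurable"
    using finJ by (intro fmeasurable.finite_UN) (auto simp: cub_lmeas)
  have RR0: "RR i \<ge> 0" for i by (simp add: RR_def Rd0)
  have U1le: "measure lebesgue U1 \<le> (\<Sum>j\<in>J. (6 * RR j) ^ d)"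
  proof -
    have "measure lebesgue U1 \<le> measure lebesgue (\<Union>j\<in>J. cub (cc j) (3 * RR j))"
      using J(3) U1eq m3 by (intro measure_mono_fmeasurable) auto
    also have "\<dots> \<le> (\<Sum>j\<in>J. measure lebesgue (cub (cc j) (3 * RR j)))"
      by (rule measure_UNION_le[OF finJ]) simp
    also have "\<dots> = (\<Sum>j\<in>J. (6 * RR j) ^ d)"
      using RR0 by (simp add: measure_cub d_def)
    finally show ?thesis .
  qed
  have Regm: "measure lebesgue Reg = pi ^ d"
    unfolding Reg_def d_def by (rule measure_cbox_const) auto
  have Regle: "pi ^ d \<le> measure lebesgue U1 + measure lebesgue U2"
  proof -
    have sub: "Reg \<subseteq> U1 \<union> U2" using cover by (simp add: U1_def U2_def)
    have "measure lebesgue Reg \<le> measure lebesgue (U1 \<union> U2)"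
    proof (rule measure_mono_fmeasurable[OF sub])
      show "Reg \<in> sets lebesgue" unfolding Reg_def by simp
      show "U1 \<union> U2 \<in> lmeasurable" using U1m U2m by (rule fmeasurable.Un)
    qed
    then have "pi ^ d \<le> measure lebesgue (U1 \<union> U2)" using Regm by simp
    also have "\<dots> \<le> measure lebesgue U1 + measure lebesgue U2"
      using U1m U2m by (intro measure_Un_le) auto
    finally show ?thesis .
  qed
  define sr where "sr j = c4 * RR j / 2" for j
  define T where "T j = box (cc j - (\<chi> i. sr j)) (cc j)" for j
  have sr0: "sr j \<ge> 0" for j using c40 RR0[of j] by (simp add: sr_def)
  have Tsub: "T j \<subseteq> cub (cc j) (RR j)" for j
  proof
    fix y assume "y \<in> T j"
    then have "\<forall>i. cc j $ i - sr j < y $ i \<and> y $ i < cc j $ i" by (simp add: T_def mem_box_cart)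
    moreover have "sr j \<le> RR j" using c41 RR0[of j] c40 mult_right_mono[of c4 1 "RR j"] by (simp add: sr_def)
    ultimately show "y \<in> cub (cc j) (RR j)"
      unfolding cub_def mem_Collect_eq
    proof (intro allI)
      fix i assume "\<forall>i. cc j $ i - sr j < y $ i \<and> y $ i < cc j $ i" "sr j \<le> RR j"
      then have "cc j $ i - sr j < y $ i" "y $ i < cc j $ i" by auto
      then show "\<bar>y $ i - cc j $ i\<bar> < RR j" using \<open>sr j \<le> RR j\<close> by linarith
    qed
  qed
  have Tm: "(\<Union>j\<in>J. T j) \<in> lmeasurable"
    using finJ by (intro fmeasurable.finite_UN) (auto simp: T_def box_lmeas)
  have Tmeas: "measure lebesgue (\<Union>j\<in>J. T j) = (\<Sum>j\<in>J. sr j ^ d)"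
  proof -
    have "measure lebesgue (\<Union>j\<in>J. T j) = (\<Sum>j\<in>J. measure lebesgue (T j))"
    proof (rule measure_UNION'[OF finJ])
      show "\<And>i. i \<in> J \<Longrightarrow> T i \<in> lmeasurable" by (simp add: T_def box_lmeas)
      show "pairwise (\<lambda>i j. disjnt (T i) (T j)) J"
        using J(2) Tsub unfolding pairwise_def by (meson disjnt_subset1 disjnt_subset2)
    qed
    also have "\<dots> = (\<Sum>j\<in>J. sr j ^ d)"
    proof (rule sum.cong[OF refl])
      fix j
      show "measure lebesgue (T j) = sr j ^ d"
        unfolding T_def d_def by (rule measure_box_const[OF _ sr0]) simp
    qed
    finally show ?thesis .
  qed
  have srR: "sr j ^ d = (c4 / 12) ^ d * (6 * RR j) ^ d" for j
  proof -
    have "sr j = (c4 / 12) * (6 * RR j)" by (simp add: sr_def)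
    then show ?thesis by (simp only: power_mult_distrib)
  qed
  have QQn: "Q powr (1 / real (n - 1)) = QQ" using nd(1) by (simp add: QQ_def)
  have subS: "(\<Union>j\<in>J. T j) \<subseteq> ?S"
  proof
    fix y assume "y \<in> (\<Union>j\<in>J. T j)"
    then obtain j where jJ: "j \<in> J" and yT: "y \<in> T j" by blast
    obtain p b where jpb: "j = (p, b)" by (cases j)
    have pG: "p \<in> {1..N}" "\<mu>0 * Q \<le> real p" "b \<in> BB p" using J(1) jJ jpb by (auto simp: G_def)
    have pr: "real p \<ge> 1" using pG by simp
    have srj: "sr j = pi * c4 / (2 * real p * real K)"
      using jpb by (simp add: sr_def RR_def Rd_def field_simps)
    show "y \<in> ?S" unfolding QQn
    proof (rule memS[where s = "sr j"])
      show "1 \<le> p" "\<mu>0 * Q \<le> real p" using pG by auto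
      show "real p \<le> Q" using pG NQ by simp
      show "\<forall>i. int p \<le> b i \<and> b i \<le> 2 * int p" using pG(3) by (simp add: BB_def PiE_UNIV_domain Pi_iff)
      show "\<forall>i. pi * real_of_int (b i) / real p - sr j < y $ i \<and> y $ i < pi * real_of_int (b i) / real p"
        using yT jpb by (simp add: T_def mem_box_cart cc_def cen_def)
      show "0 \<le> sr j" by (rule sr0)
      have "pi * c4 / (2 * real p * real K) < pi * 1 / 1"
      proof (rule frac_less2)
        show "pi * c4 \<le> pi * 1" using c41 by simp
        have "1 * 1 \<le> real p * real K" using pr K1r by (intro mult_mono) auto
        then show "1 < 2 * real p * real K" by simp
      qed (use c40 in auto)
      then show "sr j < pi" using srj by simp
      have "\<mu>0 * Q * QQ \<le> real p * (2 * real K)"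
        using pG(2) QQK QQ1 mu0 Q1 by (intro mult_mono) auto
      then have "pi * c4 / (2 * real p * real K) \<le> pi * c4 / (\<mu>0 * Q * QQ)"
        using c40 mu0 Q1 QQ1 by (intro frac_le) (auto simp: algebra_simps)
      then show "sr j \<le> pi * c4 / (\<mu>0 * Q * QQ)" using srj by simp
    qed
  qed
  have chain: "(c4 / 12) ^ d * (pi ^ d - \<mu>0 * (8 * pi) ^ d) \<le> measure lebesgue (\<Union>j\<in>J. T j)"
  proof -
    have "(c4 / 12) ^ d * (pi ^ d - \<mu>0 * (8 * pi) ^ d) \<le> (c4 / 12) ^ d * measure lebesgue U1"
      using Regle bad c40 unfolding U2_def[symmetric] by (intro mult_left_mono) auto
    also have "\<dots> \<le> (c4 / 12) ^ d * (\<Sum>j\<in>J. (6 * RR j) ^ d)"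
      using U1le c40 by (intro mult_left_mono) auto
    also have "\<dots> = (\<Sum>j\<in>J. sr j ^ d)" by (simp add: srR sum_distrib_left)
    also have "\<dots> = measure lebesgue (\<Union>j\<in>J. T j)" using Tmeas by simp
    finally show ?thesis .
  qed
  have rhs: "?rhs \<le> (c4 / 12) ^ d * (pi ^ d - \<mu>0 * (8 * pi) ^ d)"
    by (rule rhs_lemma[OF nd(1) nd(2) mu0 mu1 c40])
  have "ennreal ?rhs \<le> ennreal (measure lebesgue (\<Union>j\<in>J. T j))"
    using rhs chain by (intro ennreal_leI) linarith
  also have "\<dots> = emeasure lebesgue (\<Union>j\<in>J. T j)"
    using Tm by (simp add: emeasure_eq_measure2)
  also have "\<dots> \<le> emeasure lebesgue ?S"
    using subS Smeas by (intro emeasure_mono) auto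
  finally show ?thesis .
qed


theorem mainTheorem9:
  fixes n :: nat and Q \<mu>0 c4 :: real
  assumes hn: "n = CARD('m::finite) + 1"
    and "n \<ge> 2" and "Q \<ge> 1"
    and "0 < \<mu>0" and "\<mu>0 \<le> (4 * pi) powi (- int n)"
    and "0 < c4" and "c4 < 1"
  shows "emeasure lebesgue
     (\<Union>q\<in>{q::int. 4 * \<mu>0 * Q \<le> real_of_int q \<and> real_of_int q \<le> 4 * Q \<and> 4 dvd q}.
        \<Union>a\<in>{a :: 'm \<Rightarrow> int. \<forall>j. 2 \<le> a j \<and> a j \<le> 2 * q \<and> 2 dvd a j}.
          {y :: real ^ 'm. (\<forall>j. 0 \<le> y $ j \<and> y $ j \<le> 2 * pi) \<and>
             (\<forall>j. \<bar>y $ j - 2 * pi * real_of_int (a j) / real_of_int q\<bar>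
                  < pi * c4 / ((\<mu>0 * Q) * Q powr (1 / real (n - 1))))})
   \<ge> ennreal (c4 ^ (n - 1) * 3 powi (- int (n - 1)) * 2 powi (- int n))"
  by (rule mainlemma[OF assms])

end
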